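(* In the discrete-weight (geometric) model, let $\gamma>0$ be a fixed constant and let $\bar{\boldsymbol\theta}^*=\bar{\boldsymbol\theta}^*_n$ satisfy $q_n\le\bar\alpha_i^*+\bar\beta_j^*\le Q_n$ for all $i\ne j$, with $0<q_n\le Q_n$. Put $m_n=e^{Q_n}/(e^{Q_n}-1)^2$ and $M_n=e^{q_n}/(e^{q_n}-1)^2$ and assume $M_n/m_n=o(n)$. Suppose the realized degrees satisfy \[ \max\Bigl\{\max_{1\le i\le n}|d_i-\mathbb{E}(d_i)|,\ \max_{1\le j\le n}|b_j-\mathbb{E}(b_j)|\Bigr\}\le\sqrt{\frac{8(n-1)\log n}{\gamma q_n^2}} . \] Then, with an implicit constant depending only on $\gamma$, for all sufficiently large $n$, \[ r:=\bigl\|[F'(\bar{\boldsymbol\theta}^* )]^{-1}F(\bar{\boldsymbol\theta}^* )\bigr\|_\infty= O\Bigl(q_n^{-1}\bigl(e^{3Q_n}(1+q_n^{-4})+e^{Q_n}\bigr)\sqrt{\frac{\log n}{n}}\Bigr). \]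
   Context: Discrete-weight model: Let $n\ge2$. Parameters $\bar{\boldsymbol\theta}=(\bar\alpha_1,\dots,\bar\alpha_n,\bar\beta_1,\dots,\bar\beta_{n-1})^\top$, with $\bar\beta_n:=0$ and $\bar\alpha_i+\bar\beta_j>0$ for $i\ne j$. Under $\mathbb{P}_{\bar{\boldsymbol\theta}}$, $A=(a_{i,j})$ has $a_{i,i}=0$ and mutually independent entries $a_{i,j}$ ($i\ne j$) with $\mathbb{P}(a_{i,j}=a)=(1-e^{-(\bar\alpha_i+\bar\beta_j)})e^{-(\bar\alpha_i+\bar\beta_j)a}$, $a=0,1,2,\dots$. $d_i=\sum_{j\ne i}a_{i,j}$, $b_j=\sum_{i\ne j}a_{i,j}$; expectations are under $\mathbb{P}_{\bar{\boldsymbol\theta}^*}$. With $f(x)=1/(e^x-1)$, $F:\{\bar{\boldsymbol\theta}\}\to\mathbb{R}^{2n-1}$ is $F_i(\bar{\boldsymbol\theta})=d_i-\sum_{k\ne i}f(\bar\alpha_i+\bar\beta_k)$ ($i\le n$), $F_{n+j}(\bar{\boldsymbol\theta})=b_j-\sum_{k\ne j}f(\bar\alpha_k+\bar\beta_j)$ ($j\le n-1$), and $F'$ is its Jacobian matrix. *)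

theory Defs
  imports "HOL-Analysis.Analysis" "HOL-Library.Landau_Symbols" "Jordan_Normal_Form.Gauss_Jordan_Elimination"
begin

text \<open>A parameter vector theta of length 2n-1 is a function
  nat => real: alpha_(i+1) = theta i for i < n, beta_(j+1) = theta (n+j) for j < n-1,
  and beta_n = 0. The adjacency matrix is a function A :: nat => nat => nat (entries a_ij,
  i,j < n; diagonal entries are irrelevant since they never enter d_i, b_j).\<close>

definition alpha :: "nat \<Rightarrow> (nat \<Rightarrow> real) \<Rightarrow> nat \<Rightarrow> real" where
  "alpha n \<theta> i = \<theta> i"

definition beta :: "nat \<Rightarrow> (nat \<Rightarrow> real) \<Rightarrow> nat \<Rightarrow> real" where
  "beta n \<theta> j = (if j < n - 1 then \<theta> (n + j) else 0)"

definition fgeo :: "real \<Rightarrow> real" where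
  "fgeo x = 1 / (exp x - 1)"

definition geom_mean :: "real \<Rightarrow> real" where
  "geom_mean x = (\<Sum>a. real a * ((1 - exp (- x)) * exp (- x * real a)))"

definition out_deg :: "nat \<Rightarrow> (nat \<Rightarrow> nat \<Rightarrow> nat) \<Rightarrow> nat \<Rightarrow> real" where
  "out_deg n A i = (\<Sum>j\<in>{..<n} - {i}. real (A i j))"

definition in_deg :: "nat \<Rightarrow> (nat \<Rightarrow> nat \<Rightarrow> nat) \<Rightarrow> nat \<Rightarrow> real" where
  "in_deg n A j = (\<Sum>i\<in>{..<n} - {j}. real (A i j))"

definition E_out :: "nat \<Rightarrow> (nat \<Rightarrow> real) \<Rightarrow> nat \<Rightarrow> real" where
  "E_out n \<theta> i = (\<Sum>j\<in>{..<n} - {i}. geom_mean (alpha n \<theta> i + beta n \<theta> j))"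

definition E_in :: "nat \<Rightarrow> (nat \<Rightarrow> real) \<Rightarrow> nat \<Rightarrow> real" where
  "E_in n \<theta> j = (\<Sum>i\<in>{..<n} - {j}. geom_mean (alpha n \<theta> i + beta n \<theta> j))"

definition Fmap :: "nat \<Rightarrow> (nat \<Rightarrow> nat \<Rightarrow> nat) \<Rightarrow> (nat \<Rightarrow> real) \<Rightarrow> nat \<Rightarrow> real" where
  "Fmap n A \<theta> k =
     (if k < n then out_deg n A k - (\<Sum>l\<in>{..<n} - {k}. fgeo (alpha n \<theta> k + beta n \<theta> l))
      else in_deg n A (k - n) - (\<Sum>l\<in>{..<n} - {k - n}. fgeo (alpha n \<theta> l + beta n \<theta> (k - n))))"

definition Fvec :: "nat \<Rightarrow> (nat \<Rightarrow> nat \<Rightarrow> nat) \<Rightarrow> (nat \<Rightarrow> real) \<Rightarrow> real vec" where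
  "Fvec n A \<theta> = vec (2 * n - 1) (Fmap n A \<theta>)"

definition Jac :: "nat \<Rightarrow> (nat \<Rightarrow> nat \<Rightarrow> nat) \<Rightarrow> (nat \<Rightarrow> real) \<Rightarrow> real mat" where
  "Jac n A \<theta> = mat (2 * n - 1) (2 * n - 1)
     (\<lambda>(k, l). deriv (\<lambda>t. Fmap n A (\<theta>(l := t)) k) (\<theta> l))"

definition sup_norm_vec :: "real vec \<Rightarrow> real" where
  "sup_norm_vec v = Max ((\<lambda>i. \<bar>v $ i\<bar>) ` {..<dim_vec v})"

definition r_newton :: "nat \<Rightarrow> (nat \<Rightarrow> nat \<Rightarrow> nat) \<Rightarrow> (nat \<Rightarrow> real) \<Rightarrow> real" where
  "r_newton n A \<theta> = sup_norm_vec (the (mat_inverse (Jac n A \<theta>)) *\<^sub>v Fvec n A \<theta>)"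

end

theory Submission
  imports Defs "Jordan_Normal_Form.Determinant"
begin

lemma half_bound:
  fixes v :: "nat \<Rightarrow> nat \<Rightarrow> real" and x w :: "nat \<Rightarrow> real"
  assumes n2: "n \<ge> 2" and m: "m > 0"
  and vb: "\<And>i j. i<n \<Longrightarrow> j<n \<Longrightarrow> i\<noteq>j \<Longrightarrow> m \<le> v i j \<and> v i j \<le> M"
  and row: "\<And>i. i<n \<Longrightarrow> \<bar>\<Sum>k\<in>{..<n}-{i}. v i k * (x i - w k)\<bar> \<le> B"
  and col: "\<And>j. j<n \<Longrightarrow> \<bar>\<Sum>k\<in>{..<n}-{j}. v k j * (w j - x k)\<bar> \<le> B"
  and Tx: "\<And>i. i<n \<Longrightarrow> x i \<le> T" and Tw: "\<And>j. j<n \<Longrightarrow> w j \<le> T"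
  and a: "a<n" "x a = T"
  and D: "T - w a \<le> D"
  shows "\<forall>l<n. T - x l \<le> (M*(B/m + D) + B)/(m*(n-1))"
    and "\<forall>j<n. T - w j \<le> (M*(B/m + D) + B)/(m*(n-1)) + B/(m*(n-1))"
proof -
  have B0: "B \<ge> 0" using row[of 0] n2 by (smt (verit) abs_ge_zero less_le_trans pos2)
  have cardk: "\<And>i. i<n \<Longrightarrow> card({..<n}-{i}) = n-1" by simp
  have Mm: "m \<le> M" using vb[of 0 1] n2 by auto
  have nm: "m * (real n - 1) > 0" using n2 m by simp
  have rn: "real (n-1) = real n - 1" using n2 by simp
  have "m * (\<Sum>k\<in>{..<n}-{a}. T - w k) = (\<Sum>k\<in>{..<n}-{a}. m * (T - w k))"
    by (simp add: sum_distrib_left)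
  also have "\<dots> \<le> (\<Sum>k\<in>{..<n}-{a}. v a k * (T - w k))"
    using vb Tw a by (intro sum_mono mult_right_mono) auto
  also have "\<dots> \<le> B" using row[OF a(1)] a(2) by simp
  finally have s1: "(\<Sum>k\<in>{..<n}-{a}. T - w k) \<le> B/m" using m by (simp add: field_simps)
  have "(\<Sum>k\<in>{..<n}. T - w k) = (T - w a) + (\<Sum>k\<in>{..<n}-{a}. T - w k)"
    using a by (simp add: sum.remove)
  also have "\<dots> \<le> B/m + D" using s1 D by simp
  finally have s2: "(\<Sum>k\<in>{..<n}. T - w k) \<le> B/m + D" .
  define \<delta> where "\<delta> = (M*(B/m + D) + B)/(m*(n-1))"
  have rowl: "T - x l \<le> \<delta>" if l: "l<n" for l
  proof -
    have "(\<Sum>k\<in>{..<n}-{l}. v l k * (T - w k)) \<le> (\<Sum>k\<in>{..<n}-{l}. M * (T - w k))"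
      using vb Tw l by (intro sum_mono mult_right_mono) auto
    also have "\<dots> = M * (\<Sum>k\<in>{..<n}-{l}. T - w k)" by (simp add: sum_distrib_left)
    also have "\<dots> \<le> M * (\<Sum>k\<in>{..<n}. T - w k)"
      using Mm m Tw by (intro mult_left_mono sum_mono2) auto
    also have "\<dots> \<le> M * (B/m + D)" using s2 Mm m by (intro mult_left_mono) auto
    finally have A1: "(\<Sum>k\<in>{..<n}-{l}. v l k * (T - w k)) \<le> M * (B/m + D)" .
    have "(T - x l) * (\<Sum>k\<in>{..<n}-{l}. v l k) = (\<Sum>k\<in>{..<n}-{l}. v l k * (T - w k)) - (\<Sum>k\<in>{..<n}-{l}. v l k * (x l - w k))"
      by (simp add: sum_distrib_left sum_subtractf[symmetric] algebra_simps)
    also have "\<dots> \<le> M * (B/m + D) + B" using A1 row[OF l] by linarith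
    finally have A2: "(T - x l) * (\<Sum>k\<in>{..<n}-{l}. v l k) \<le> M * (B/m + D) + B" .
    have "m * (real n - 1) = (\<Sum>k\<in>{..<n}-{l}. m)" using cardk[OF l] rn by simp
    also have "\<dots> \<le> (\<Sum>k\<in>{..<n}-{l}. v l k)" using vb l by (intro sum_mono) auto
    finally have A3: "m * (real n - 1) \<le> (\<Sum>k\<in>{..<n}-{l}. v l k)" .
    have "(T - x l) * (m * (real n - 1)) \<le> (T - x l) * (\<Sum>k\<in>{..<n}-{l}. v l k)"
      using A3 Tx[OF l] by (intro mult_left_mono) auto
    with A2 have "(T - x l) * (m * (real n - 1)) \<le> M * (B/m + D) + B" by linarith
    thus ?thesis unfolding \<delta>_def using nm rn by (simp add: pos_le_divide_eq)
  qed
  have colj: "T - w j \<le> \<delta> + B/(m*(n-1))" if j: "j<n" for j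
  proof -
    define S where "S = (\<Sum>k\<in>{..<n}-{j}. v k j)"
    have e1: "(T - w j) * S = (\<Sum>k\<in>{..<n}-{j}. v k j * (T - x k)) - (\<Sum>k\<in>{..<n}-{j}. v k j * (w j - x k))"
      unfolding S_def by (simp add: sum_distrib_left sum_subtractf[symmetric] algebra_simps)
    have "(\<Sum>k\<in>{..<n}-{j}. v k j * (T - x k)) \<le> (\<Sum>k\<in>{..<n}-{j}. v k j * \<delta>)"
      using vb rowl j m by (intro sum_mono mult_left_mono) (auto, smt (verit))
    also have "\<dots> = \<delta> * S" unfolding S_def by (simp add: sum_distrib_left mult.commute)
    finally have e2: "(\<Sum>k\<in>{..<n}-{j}. v k j * (T - x k)) \<le> \<delta> * S" .
    have e3: "(T - w j - \<delta>) * S = (T - w j) * S - \<delta> * S" by (simp add: algebra_simps)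
    have A2: "(T - w j - \<delta>) * (\<Sum>k\<in>{..<n}-{j}. v k j) \<le> B"
      using e1 e2 e3 col[OF j] unfolding S_def[symmetric] by linarith
    have "m * (real n - 1) = (\<Sum>k\<in>{..<n}-{j}. m)" using cardk[OF j] rn by simp
    also have "\<dots> \<le> (\<Sum>k\<in>{..<n}-{j}. v k j)" using vb j by (intro sum_mono) auto
    finally have A3: "m * (real n - 1) \<le> (\<Sum>k\<in>{..<n}-{j}. v k j)" .
    show ?thesis
    proof (cases "T - w j - \<delta> \<le> 0")
      case True
      have "B/(m*(real n - 1)) \<ge> 0" using nm B0 by simp
      then show ?thesis using True unfolding rn by linarith
    next
      case False
      have "(T - w j - \<delta>) * (m * (real n - 1)) \<le> (T - w j - \<delta>) * (\<Sum>k\<in>{..<n}-{j}. v k j)"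
        using A3 False by (intro mult_left_mono) auto
      with A2 have "(T - w j - \<delta>) * (m * (real n - 1)) \<le> B" by linarith
      hence "T - w j - \<delta> \<le> B / (m * (real n - 1))" using nm by (simp add: pos_le_divide_eq)
      thus ?thesis unfolding rn by linarith
    qed
  qed
  show "\<forall>l<n. T - x l \<le> (M*(B/m + D) + B)/(m*(n-1))" using rowl \<delta>_def by auto
  show "\<forall>j<n. T - w j \<le> (M*(B/m + D) + B)/(m*(n-1)) + B/(m*(n-1))" using colj \<delta>_def by auto
qed
lemma range_bound:
  fixes v :: "nat \<Rightarrow> nat \<Rightarrow> real" and x w :: "nat \<Rightarrow> real"
  assumes n2: "n \<ge> 2" and m: "m > 0"
  and vb: "\<And>i j. i<n \<Longrightarrow> j<n \<Longrightarrow> i\<noteq>j \<Longrightarrow> m \<le> v i j \<and> v i j \<le> M"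
  and row: "\<And>i. i<n \<Longrightarrow> \<bar>\<Sum>k\<in>{..<n}-{i}. v i k * (x i - w k)\<bar> \<le> B"
  and col: "\<And>j. j<n \<Longrightarrow> \<bar>\<Sum>k\<in>{..<n}-{j}. v k j * (w j - x k)\<bar> \<le> B"
  and Mn: "2*M \<le> m*(real n - 1)"
  shows "\<forall>u\<in>x`{..<n} \<union> w`{..<n}. \<forall>u'\<in>x`{..<n} \<union> w`{..<n}. u - u' \<le> 2*(M*B/m + 2*B)/(m*(real n - 1))"
proof -
  define S where "S = x`{..<n} \<union> w`{..<n}"
  have fin: "finite S" and ne: "S \<noteq> {}" unfolding S_def using n2 by (auto simp: lessThan_empty_iff)
  define T where "T = Max S"
  define L where "L = Min S"
  have TS: "T \<in> S" unfolding T_def using fin ne by simp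
  have LS: "L \<in> S" unfolding L_def using fin ne by simp
  have Tge: "\<And>u. u \<in> S \<Longrightarrow> u \<le> T" unfolding T_def using fin by simp
  have Lle: "\<And>u. u \<in> S \<Longrightarrow> L \<le> u" unfolding L_def using fin by simp
  have Tx: "\<And>i. i<n \<Longrightarrow> x i \<le> T" and Tw: "\<And>i. i<n \<Longrightarrow> w i \<le> T"
    using Tge unfolding S_def by auto
  have Lx: "\<And>i. i<n \<Longrightarrow> T - x i \<le> T - L" and Lw: "\<And>i. i<n \<Longrightarrow> T - w i \<le> T - L"
    using Lle unfolding S_def by auto
  have B0: "B \<ge> 0" using row[of 0] n2 by (smt (verit) abs_ge_zero less_le_trans pos2)
  have nm: "m * (real n - 1) > 0" using n2 m by simp
  have rn: "real (n-1) = real n - 1" using n2 by simp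
  define D where "D = T - L"
  have key: "D \<le> (M*(B/m + D) + B)/(m*(real n-1)) + B/(m*(real n-1))"
  proof -
    from TS obtain a where "(a<n \<and> x a = T) \<or> (a<n \<and> w a = T)" unfolding S_def by auto
    then show ?thesis
    proof
      assume a: "a<n \<and> x a = T"
      have h: "\<forall>j<n. T - w j \<le> (M*(B/m + D) + B)/(m*(n-1)) + B/(m*(n-1))"
        using half_bound(2)[OF n2 m vb row col Tx Tw, of a D] a Lw D_def by auto
      have h1: "\<forall>l<n. T - x l \<le> (M*(B/m + D) + B)/(m*(n-1))"
        using half_bound(1)[OF n2 m vb row col Tx Tw, of a D] a Lw D_def by auto
      have "B/(m*(real n-1)) \<ge> 0" using B0 nm by simp
      with LS h h1 show ?thesis unfolding S_def D_def rn by auto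
    next
      assume a: "a<n \<and> w a = T"
      have vb': "\<And>i j. i<n \<Longrightarrow> j<n \<Longrightarrow> i\<noteq>j \<Longrightarrow> m \<le> v j i \<and> v j i \<le> M" using vb by auto
      have h: "\<forall>j<n. T - x j \<le> (M*(B/m + D) + B)/(m*(n-1)) + B/(m*(n-1))"
        using half_bound(2)[OF n2 m vb' col row Tw Tx, of a D] a Lx D_def by auto
      have h1: "\<forall>l<n. T - w l \<le> (M*(B/m + D) + B)/(m*(n-1))"
        using half_bound(1)[OF n2 m vb' col row Tw Tx, of a D] a Lx D_def by auto
      have "B/(m*(real n-1)) \<ge> 0" using B0 nm by simp
      with LS h h1 show ?thesis unfolding S_def D_def rn by auto
    qed
  qed
  have "D * (m*(real n-1)) \<le> M*(B/m + D) + 2*B"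
  proof -
    have "D * (m*(real n-1)) \<le> ((M*(B/m + D) + B)/(m*(real n-1)) + B/(m*(real n-1))) * (m*(real n-1))"
      using key nm by (intro mult_right_mono) auto
    also have "\<dots> = M*(B/m + D) + 2*B"
    proof -
      have g: "\<And>X Y c. c \<noteq> 0 \<Longrightarrow> (X/c + Y/c)*c = (X+Y::real)" by (simp add: field_simps)
      have "m*(real n-1) \<noteq> 0" using nm by (metis less_irrefl)
      from g[OF this, of "M*(B/m + D) + B" B] show ?thesis by simp
    qed
    finally show ?thesis .
  qed
  hence "D * (m*(real n-1) - M) \<le> M*B/m + 2*B" by (simp add: algebra_simps)
  moreover have "D \<ge> 0" unfolding D_def using TS Lle by auto
  ultimately have "D * (m*(real n-1)/2) \<le> M*B/m + 2*B"
  proof -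
    assume a1: "D * (m*(real n-1) - M) \<le> M*B/m + 2*B" and a2: "D \<ge> 0"
    have "D * (m*(real n-1)/2) \<le> D * (m*(real n-1) - M)" using a2 Mn by (intro mult_left_mono) auto
    with a1 show ?thesis by linarith
  qed
  hence D: "D \<le> 2*(M*B/m + 2*B)/(m*(real n - 1))" using nm by (simp add: field_simps)
  show ?thesis unfolding S_def[symmetric] using D Tge Lle D_def by fastforce
qed
definition vfun :: "real \<Rightarrow> real" where "vfun x = exp x / (exp x - 1)^2"

lemma geom_mean_eq: assumes "x > 0" shows "geom_mean x = fgeo x"
proof -
  define r where "r = exp (-x)"
  have r0: "0 < r" "r < 1" unfolding r_def using assms by auto
  have e: "\<And>a. exp (- x * real a) = r ^ a" unfolding r_def
    by (metis exp_of_nat_mult mult.commute)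
  define f where "f = (\<lambda>a::nat. real a * r ^ a)"
  have "(\<lambda>a. real (Suc a) * r ^ a) sums (1 / (1 - r)^2)"
    using geometric_deriv_sums[of r] r0 by simp
  hence "(\<lambda>a. r * (real (Suc a) * r ^ a)) sums (r * (1 / (1 - r)^2))" by (rule sums_mult)
  hence "(\<lambda>a. f (Suc a)) sums (r / (1 - r)^2)" unfolding f_def by (simp add: algebra_simps)
  hence "f sums (r / (1 - r)^2 + f 0)" using sums_Suc_iff[of f] by blast
  hence "f sums (r / (1 - r)^2)" by (simp add: f_def)
  hence "(\<lambda>a. (1 - r) * f a) sums ((1 - r) * (r / (1 - r)^2))" by (rule sums_mult)
  moreover have "(1 - r) * (r / (1 - r)^2) = r / (1 - r)" using r0 by (simp add: power2_eq_square)
  moreover have "(\<lambda>a. (1 - r) * f a) = (\<lambda>a. real a * ((1 - r) * r ^ a))" unfolding f_def by (simp add: algebra_simps)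
  ultimately have s: "(\<lambda>a. real a * ((1 - r) * r ^ a)) sums (r / (1 - r))" by simp
  have "geom_mean x = r / (1 - r)" unfolding geom_mean_def e r_def[symmetric] using sums_unique[OF s] by simp
  also have "\<dots> = fgeo x" unfolding fgeo_def r_def using assms
    by (simp add: exp_minus field_simps)
  finally show ?thesis .
qed

lemma fgeo_deriv: assumes "x \<noteq> 0" shows "(fgeo has_real_derivative - vfun x) (at x)"
proof -
  have ne: "exp x - 1 \<noteq> 0" using assms by simp
  have "((\<lambda>x. 1 / (exp x - 1)) has_real_derivative - (exp x / (exp x - 1)^2)) (at x)"
    by (rule derivative_eq_intros refl | use ne in \<open>simp add: power2_eq_square\<close>)+
  thus ?thesis unfolding fgeo_def[abs_def] vfun_def by simp
qed

lemma term_deriv: assumes "s \<noteq> 0"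
  shows "((\<lambda>t. fgeo (s + (if P then t - t0 else 0))) has_real_derivative (if P then - vfun s else 0)) (at t0)"
proof (cases P)
  case True
  have d: "(fgeo has_real_derivative - vfun s) (at ((\<lambda>t. s + (t - t0)) t0))"
    using fgeo_deriv[OF assms] by simp
  have g: "((\<lambda>t. s + (t - t0)) has_real_derivative 1) (at t0)"
    by (rule derivative_eq_intros refl | simp)+
  have "((\<lambda>t. fgeo (s + (t - t0))) has_real_derivative (- vfun s) * 1) (at t0)"
    using DERIV_chain2[OF d g] by simp
  then show ?thesis using True by simp
qed simp
lemma arg_upd: assumes "i < n"
  shows "alpha n (p(l0:=t)) i + beta n (p(l0:=t)) j
       = (alpha n p i + beta n p j) + (if l0 = i \<or> (j<n-1 \<and> l0 = n+j) then t - p l0 else 0)"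
  using assms unfolding alpha_def beta_def by auto

lemma Jac_row_deriv:
  assumes k: "k < n" and pos: "\<And>l. l<n \<Longrightarrow> l\<noteq>k \<Longrightarrow> alpha n p k + beta n p l \<noteq> 0"
  shows "deriv (\<lambda>t. Fmap n A (p(l0:=t)) k) (p l0)
     = (\<Sum>l\<in>{..<n}-{k}. if l0 = k \<or> (l<n-1 \<and> l0 = n+l) then vfun (alpha n p k + beta n p l) else 0)"
proof -
  have feq: "(\<lambda>t. Fmap n A (p(l0:=t)) k) = (\<lambda>t. out_deg n A k -
     (\<Sum>l\<in>{..<n}-{k}. fgeo ((alpha n p k + beta n p l) + (if l0 = k \<or> (l<n-1 \<and> l0 = n+l) then t - p l0 else 0))))"
    using k by (simp add: Fmap_def arg_upd)
  have "((\<lambda>t. out_deg n A k -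
     (\<Sum>l\<in>{..<n}-{k}. fgeo ((alpha n p k + beta n p l) + (if l0 = k \<or> (l<n-1 \<and> l0 = n+l) then t - p l0 else 0))))
     has_real_derivative 0 - (\<Sum>l\<in>{..<n}-{k}. if l0 = k \<or> (l<n-1 \<and> l0 = n+l) then - vfun (alpha n p k + beta n p l) else 0)) (at (p l0))"
    by (intro DERIV_diff DERIV_const DERIV_sum term_deriv) (use pos in auto)
  hence "deriv (\<lambda>t. Fmap n A (p(l0:=t)) k) (p l0) = 0 - (\<Sum>l\<in>{..<n}-{k}. if l0 = k \<or> (l<n-1 \<and> l0 = n+l) then - vfun (alpha n p k + beta n p l) else 0)"
    unfolding feq by (rule DERIV_imp_deriv)
  also have "\<dots> = (\<Sum>l\<in>{..<n}-{k}. if l0 = k \<or> (l<n-1 \<and> l0 = n+l) then vfun (alpha n p k + beta n p l) else 0)"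
    by (simp add: sum_negf[symmetric] if_distrib cong: if_cong)
  finally show ?thesis .
qed

lemma Jac_col_deriv:
  assumes k: "n \<le> k" "k < 2*n-1"
    and pos: "\<And>l. l<n \<Longrightarrow> l\<noteq>k-n \<Longrightarrow> alpha n p l + beta n p (k-n) \<noteq> 0"
  shows "deriv (\<lambda>t. Fmap n A (p(l0:=t)) k) (p l0)
     = (\<Sum>l\<in>{..<n}-{k-n}. if l0 = l \<or> l0 = k then vfun (alpha n p l + beta n p (k-n)) else 0)"
proof -
  have kk: "k - n < n - 1" "n + (k - n) = k" using k by auto
  have feq: "(\<lambda>t. Fmap n A (p(l0:=t)) k) = (\<lambda>t. in_deg n A (k-n) -
     (\<Sum>l\<in>{..<n}-{k-n}. fgeo ((alpha n p l + beta n p (k-n)) + (if l0 = l \<or> l0 = k then t - p l0 else 0))))"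
  proof
    fix t
    have "\<And>l. l \<in> {..<n}-{k-n} \<Longrightarrow> alpha n (p(l0:=t)) l + beta n (p(l0:=t)) (k-n)
       = (alpha n p l + beta n p (k-n)) + (if l0 = l \<or> l0 = k then t - p l0 else 0)"
      using arg_upd[of _ n p l0 t "k-n"] kk by auto
    then show "Fmap n A (p(l0:=t)) k = in_deg n A (k-n) -
     (\<Sum>l\<in>{..<n}-{k-n}. fgeo ((alpha n p l + beta n p (k-n)) + (if l0 = l \<or> l0 = k then t - p l0 else 0)))"
      using k unfolding Fmap_def by (auto intro!: sum.cong)
  qed
  have "((\<lambda>t. in_deg n A (k-n) -
     (\<Sum>l\<in>{..<n}-{k-n}. fgeo ((alpha n p l + beta n p (k-n)) + (if l0 = l \<or> l0 = k then t - p l0 else 0))))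
     has_real_derivative 0 - (\<Sum>l\<in>{..<n}-{k-n}. if l0 = l \<or> l0 = k then - vfun (alpha n p l + beta n p (k-n)) else 0)) (at (p l0))"
    by (intro DERIV_diff DERIV_const DERIV_sum term_deriv) (use pos in auto)
  hence "deriv (\<lambda>t. Fmap n A (p(l0:=t)) k) (p l0) = 0 - (\<Sum>l\<in>{..<n}-{k-n}. if l0 = l \<or> l0 = k then - vfun (alpha n p l + beta n p (k-n)) else 0)"
    unfolding feq by (rule DERIV_imp_deriv)
  also have "\<dots> = (\<Sum>l\<in>{..<n}-{k-n}. if l0 = l \<or> l0 = k then vfun (alpha n p l + beta n p (k-n)) else 0)"
    by (simp add: sum_negf[symmetric] if_distrib cong: if_cong)
  finally show ?thesis .
qed
lemma sum_pick2:
  fixes g :: "nat \<Rightarrow> real"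
  assumes "a < N" "c \<Longrightarrow> b < N" "a \<noteq> b"
  shows "(\<Sum>l0<N. if l0 = a \<or> (c \<and> l0 = b) then g l0 else 0) = g a + (if c then g b else 0)"
proof -
  have "(\<Sum>l0<N. if l0 = a \<or> (c \<and> l0 = b) then g l0 else 0)
      = (\<Sum>l0<N. (if l0 = a then g l0 else 0) + (if c \<and> l0 = b then g l0 else 0))"
    using assms(3) by (intro sum.cong) auto
  also have "\<dots> = (\<Sum>l0<N. if l0 = a then g l0 else 0) + (\<Sum>l0<N. if c \<and> l0 = b then g l0 else 0)"
    by (rule sum.distrib)
  also have "\<dots> = g a + (if c then g b else 0)" using assms by (cases c) (auto simp: sum.delta)
  finally show ?thesis .
qed

lemma Jac_mult_row:
  assumes k: "k < n" and n2: "n \<ge> 2" and dz: "dim_vec z = 2*n-1"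
    and pos: "\<And>i j. i<n \<Longrightarrow> j<n \<Longrightarrow> i\<noteq>j \<Longrightarrow> alpha n p i + beta n p j \<noteq> 0"
  shows "(Jac n A p *\<^sub>v z) $ k = (\<Sum>l\<in>{..<n}-{k}. vfun (alpha n p k + beta n p l) *
           (z $ k - (if l < n-1 then - z $ (n+l) else 0)))"
proof -
  have "(Jac n A p *\<^sub>v z) $ k = (\<Sum>l0<2*n-1. Jac n A p $$ (k,l0) * z $ l0)"
    using k dz unfolding Jac_def by (simp add: scalar_prod_def atLeast0LessThan)
  also have "\<dots> = (\<Sum>l0<2*n-1. (\<Sum>l\<in>{..<n}-{k}. if l0 = k \<or> (l<n-1 \<and> l0 = n+l) then vfun (alpha n p k + beta n p l) else 0) * z $ l0)"
    using k by (intro sum.cong refl) (simp add: Jac_def Jac_row_deriv pos)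
  also have "\<dots> = (\<Sum>l\<in>{..<n}-{k}. (\<Sum>l0<2*n-1. if l0 = k \<or> (l<n-1 \<and> l0 = n+l) then vfun (alpha n p k + beta n p l) * z $ l0 else 0))"
    by (simp only: sum_distrib_right, subst sum.swap, intro sum.cong refl) auto
  also have "\<dots> = (\<Sum>l\<in>{..<n}-{k}. vfun (alpha n p k + beta n p l) * (z $ k - (if l < n-1 then - z $ (n+l) else 0)))"
  proof (intro sum.cong refl)
    fix l assume l: "l \<in> {..<n}-{k}"
    have "(\<Sum>l0<2*n-1. if l0 = k \<or> (l<n-1 \<and> l0 = n+l) then vfun (alpha n p k + beta n p l) * z $ l0 else 0)
      = vfun (alpha n p k + beta n p l) * z $ k + (if l<n-1 then vfun (alpha n p k + beta n p l) * z $ (n+l) else 0)"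
      using k l n2 by (intro sum_pick2) auto
    then show "(\<Sum>l0<2*n-1. if l0 = k \<or> (l<n-1 \<and> l0 = n+l) then vfun (alpha n p k + beta n p l) * z $ l0 else 0)
      = vfun (alpha n p k + beta n p l) * (z $ k - (if l < n-1 then - z $ (n+l) else 0))"
      by (simp add: algebra_simps)
  qed
  finally show ?thesis .
qed

lemma Jac_mult_col:
  assumes k: "n \<le> k" "k < 2*n-1" and n2: "n \<ge> 2" and dz: "dim_vec z = 2*n-1"
    and pos: "\<And>i j. i<n \<Longrightarrow> j<n \<Longrightarrow> i\<noteq>j \<Longrightarrow> alpha n p i + beta n p j \<noteq> 0"
  shows "(Jac n A p *\<^sub>v z) $ k = (\<Sum>l\<in>{..<n}-{k-n}. vfun (alpha n p l + beta n p (k-n)) *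
           (z $ l - (- z $ k)))"
proof -
  have "(Jac n A p *\<^sub>v z) $ k = (\<Sum>l0<2*n-1. Jac n A p $$ (k,l0) * z $ l0)"
    using k dz unfolding Jac_def by (simp add: scalar_prod_def atLeast0LessThan)
  also have "\<dots> = (\<Sum>l0<2*n-1. (\<Sum>l\<in>{..<n}-{k-n}. if l0 = l \<or> l0 = k then vfun (alpha n p l + beta n p (k-n)) else 0) * z $ l0)"
    using k by (intro sum.cong refl) (simp add: Jac_def Jac_col_deriv pos)
  also have "\<dots> = (\<Sum>l\<in>{..<n}-{k-n}. (\<Sum>l0<2*n-1. if l0 = l \<or> (True \<and> l0 = k) then vfun (alpha n p l + beta n p (k-n)) * z $ l0 else 0))"
    by (simp only: sum_distrib_right, subst sum.swap, intro sum.cong refl) auto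
  also have "\<dots> = (\<Sum>l\<in>{..<n}-{k-n}. vfun (alpha n p l + beta n p (k-n)) * (z $ l - (- z $ k)))"
  proof (intro sum.cong refl)
    fix l assume l: "l \<in> {..<n}-{k-n}"
    have "(\<Sum>l0<2*n-1. if l0 = l \<or> (True \<and> l0 = k) then vfun (alpha n p l + beta n p (k-n)) * z $ l0 else 0)
      = vfun (alpha n p l + beta n p (k-n)) * z $ l + (if True then vfun (alpha n p l + beta n p (k-n)) * z $ k else 0)"
      using k l n2 by (intro sum_pick2) auto
    then show "(\<Sum>l0<2*n-1. if l0 = l \<or> (True \<and> l0 = k) then vfun (alpha n p l + beta n p (k-n)) * z $ l0 else 0)
      = vfun (alpha n p l + beta n p (k-n)) * (z $ l - (- z $ k))"
      by (simp add: algebra_simps)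
  qed
  finally show ?thesis .
qed
lemma offdiag_swap:
  fixes g :: "nat \<Rightarrow> nat \<Rightarrow> real"
  shows "(\<Sum>i<n. \<Sum>l\<in>{..<n}-{i}. g i l) = (\<Sum>l<n. \<Sum>i\<in>{..<n}-{l}. g i l)"
proof -
  have "(\<Sum>i<n. \<Sum>l\<in>{..<n}-{i}. g i l) = (\<Sum>i<n. \<Sum>l<n. if l \<noteq> i then g i l else 0)"
  proof (rule sum.cong[OF refl])
    fix i
    have "{..<n}-{i} = {l\<in>{..<n}. l \<noteq> i}" by auto
    then show "(\<Sum>l\<in>{..<n}-{i}. g i l) = (\<Sum>l<n. if l \<noteq> i then g i l else 0)"
      using sum.inter_filter[of "{..<n}" "g i" "\<lambda>l. l \<noteq> i"] by simp
  qed
  also have "\<dots> = (\<Sum>l<n. \<Sum>i<n. if l \<noteq> i then g i l else 0)" by (rule sum.swap)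
  also have "\<dots> = (\<Sum>l<n. \<Sum>i\<in>{..<n}-{l}. g i l)"
  proof (rule sum.cong[OF refl])
    fix l
    have "{..<n}-{l} = {i\<in>{..<n}. l \<noteq> i}" by auto
    then show "(\<Sum>i<n. if l \<noteq> i then g i l else 0) = (\<Sum>i\<in>{..<n}-{l}. g i l)"
      using sum.inter_filter[of "{..<n}" "\<lambda>i. g i l" "\<lambda>i. l \<noteq> i"] by simp
  qed
  finally show ?thesis .
qed

lemma solve_bound:
  assumes n2: "n \<ge> 2" and m: "m > 0"
    and vb: "\<And>i j. i<n \<Longrightarrow> j<n \<Longrightarrow> i\<noteq>j \<Longrightarrow> alpha n p i + beta n p j \<noteq> 0 \<and>
        m \<le> vfun (alpha n p i + beta n p j) \<and> vfun (alpha n p i + beta n p j) \<le> M"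
    and Mn: "2*M \<le> m*(real n - 1)"
    and dz: "dim_vec z = 2*n-1"
    and eq: "\<And>k. k < 2*n-1 \<Longrightarrow> (Jac n A p *\<^sub>v z) $ k = F k"
    and FB: "\<And>k. k < 2*n-1 \<Longrightarrow> \<bar>F k\<bar> \<le> B"
    and FL: "\<bar>(\<Sum>k<n. F k) - (\<Sum>j<n-1. F (n+j))\<bar> \<le> B"
  shows "\<forall>i<2*n-1. \<bar>z $ i\<bar> \<le> 2*(M*B/m + 2*B)/(m*(real n - 1))"
proof -
  define x where "x i = z $ i" for i
  define w where "w l = (if l < n-1 then - z $ (n+l) else 0)" for l
  define v where "v i j = vfun (alpha n p i + beta n p j)" for i j
  have pos: "\<And>i j. i<n \<Longrightarrow> j<n \<Longrightarrow> i\<noteq>j \<Longrightarrow> alpha n p i + beta n p j \<noteq> 0" using vb by blast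
  have vb': "\<And>i j. i<n \<Longrightarrow> j<n \<Longrightarrow> i\<noteq>j \<Longrightarrow> m \<le> v i j \<and> v i j \<le> M" using vb unfolding v_def by blast
  define R where "R i = (\<Sum>k\<in>{..<n}-{i}. v i k * (x i - w k))" for i
  define C where "C j = (\<Sum>k\<in>{..<n}-{j}. v k j * (x k - w j))" for j
  have Rk: "R k = F k" if "k<n" for k
  proof -
    have "k < 2*n-1" using that n2 by simp
    with that show ?thesis using Jac_mult_row[OF that n2 dz pos, of A] eq unfolding R_def v_def x_def w_def by auto
  qed
  have Cj: "C j = F (n+j)" if "j<n-1" for j
  proof -
    have k: "n \<le> n+j" "n+j < 2*n-1" using that by auto
    have "C j = (Jac n A p *\<^sub>v z) $ (n+j)"
      using Jac_mult_col[OF k n2 dz pos, of A] that unfolding C_def v_def x_def w_def by auto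
    with eq k show ?thesis by simp
  qed
  have sumRC: "(\<Sum>i<n. R i) = (\<Sum>j<n. C j)" unfolding R_def C_def
    using offdiag_swap[of "\<lambda>i l. v i l * (x i - w l)" n] by simp
  have nset: "{..<n} = insert (n-1) {..<n-1}" using n2 by auto
  have "(\<Sum>j<n. C j) = C (n-1) + (\<Sum>j<n-1. C j)" unfolding nset by simp
  hence "C (n-1) = (\<Sum>k<n. F k) - (\<Sum>j<n-1. F (n+j))" using sumRC Rk Cj by simp
  hence Cl: "\<bar>C (n-1)\<bar> \<le> B" using FL by simp
  have row: "\<And>i. i<n \<Longrightarrow> \<bar>\<Sum>k\<in>{..<n}-{i}. v i k * (x i - w k)\<bar> \<le> B"
  proof -
    fix i assume i: "i<n"
    hence "i < 2*n-1" by simp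
    thus "\<bar>\<Sum>k\<in>{..<n}-{i}. v i k * (x i - w k)\<bar> \<le> B" using Rk[OF i] FB unfolding R_def by simp
  qed
  have col: "\<And>j. j<n \<Longrightarrow> \<bar>\<Sum>k\<in>{..<n}-{j}. v k j * (w j - x k)\<bar> \<le> B"
  proof -
    fix j assume j: "j<n"
    have "(\<Sum>k\<in>{..<n}-{j}. v k j * (w j - x k)) = - C j" unfolding C_def
      by (simp add: sum_negf[symmetric] algebra_simps)
    moreover have "\<bar>C j\<bar> \<le> B"
    proof (cases "j < n-1")
      case True then show ?thesis using Cj FB[of "n+j"] by simp
    next
      case False then have "j = n-1" using j by simp
      then show ?thesis using Cl by simp
    qed
    ultimately show "\<bar>\<Sum>k\<in>{..<n}-{j}. v k j * (w j - x k)\<bar> \<le> B" by simp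
  qed
  note rb = range_bound[OF n2 m vb' row col Mn]
  have w0: "w (n-1) = 0" unfolding w_def by simp
  have inS: "w (n-1) \<in> x`{..<n} \<union> w`{..<n}" using n2 by auto
  show ?thesis
  proof (intro allI impI)
    fix i assume i: "i < 2*n-1"
    show "\<bar>z $ i\<bar> \<le> 2*(M*B/m + 2*B)/(m*(real n - 1))"
    proof (cases "i < n")
      case True
      have "x i \<in> x`{..<n} \<union> w`{..<n}" using True by auto
      then show ?thesis using rb inS w0 unfolding x_def by (smt (verit))
    next
      case False
      have "w (i-n) \<in> x`{..<n} \<union> w`{..<n}" using False i by auto
      moreover have "w (i-n) = - z $ i" using False i unfolding w_def by auto
      ultimately show ?thesis using rb inS w0 by (smt (verit))
    qed
  qed
qed
lemma vfun_antimono: assumes "0 < a" "a \<le> b" shows "vfun b \<le> vfun a"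
proof -
  define X where "X = exp a"
  define Y where "Y = exp b"
  have X1: "1 < X" unfolding X_def using assms by simp
  have XY: "X \<le> Y" unfolding X_def Y_def using assms by simp
  have "(Y-1)^2*X - (X-1)^2*Y = (Y-X)*(X*Y-1)" by (simp add: power2_eq_square algebra_simps)
  also have "\<dots> \<ge> 0" using X1 XY by (intro mult_nonneg_nonneg) (auto, smt (verit) mult_less_cancel_right2)
  finally have "Y * (X-1)^2 \<le> X * (Y-1)^2" by (simp add: algebra_simps)
  moreover have "(X-1)^2 > 0" "(Y-1)^2 > 0" using X1 XY by auto
  ultimately have "Y / (Y-1)^2 \<le> X / (X-1)^2" by (simp add: divide_simps)
  thus ?thesis unfolding vfun_def X_def Y_def .
qed

lemma vfun_pos: "x > 0 \<Longrightarrow> vfun x > 0" unfolding vfun_def by simp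

lemma final_arith:
  fixes q Q nr L \<gamma> :: real
  assumes q: "q > 0" "q \<le> Q" and nr: "nr \<ge> 2" and L: "L \<ge> 0" and g: "\<gamma> > 0"
  shows "2*(vfun q * sqrt (8*(nr-1)*L/(\<gamma>*q^2))/vfun Q + 2* sqrt (8*(nr-1)*L/(\<gamma>*q^2)))/(vfun Q*(nr-1))
     \<le> (16/sqrt \<gamma>) * ((1/q) * (exp (3*Q) * (1 + 1/q^4) + exp Q) * sqrt (L/nr))"
proof -
  define Bd where "Bd = sqrt (8*(nr-1)*L/(\<gamma>*q^2))"
  define m where "m = vfun Q"
  define M where "M = vfun q"
  define K where "K = exp (3*Q) * (1 + 1/q^4) + exp Q"
  define s where "s = sqrt (L/nr)"
  have m0: "m > 0" unfolding m_def using q by (intro vfun_pos) auto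
  have M0: "M > 0" unfolding M_def using q by (intro vfun_pos) auto
  have Bd0: "Bd \<ge> 0" unfolding Bd_def using nr L g by simp
  have s0: "s \<ge> 0" unfolding s_def using nr L by simp
  have n1: "nr - 1 > 0" using nr by simp
  have d: "Bd/(nr-1) \<le> 4/sqrt \<gamma> * (1/q) * s"
  proof (rule power2_le_imp_le)
    show "0 \<le> 4/sqrt \<gamma> * (1/q) * s" using g q s0 by simp
    have "(Bd/(nr-1))^2 = (8*(nr-1)*L/(\<gamma>*q^2)) / (nr-1)^2"
      unfolding Bd_def using nr L g by (simp add: power_divide)
    also have "\<dots> = 8*L/(\<gamma>*q^2*(nr-1))"
    proof -
      have gen: "\<And>t G. t \<noteq> 0 \<Longrightarrow> (8*t*L/G)/t^2 = 8*L/(G*t)" by (simp add: power2_eq_square)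
      show ?thesis using gen[of "nr-1" "\<gamma>*q^2"] n1 by simp
    qed
    also have "\<dots> \<le> 16*L/(\<gamma>*q^2*nr)"
    proof -
      have e1: "8*L/(\<gamma>*q^2*(nr-1)) = (L/(\<gamma>*q^2)) * (8/(nr-1))" by simp
      have e2: "16*L/(\<gamma>*q^2*nr) = (L/(\<gamma>*q^2)) * (16/nr)" by simp
      have "8/(nr-1) \<le> 16/nr" using nr n1 by (simp add: divide_simps)
      moreover have "L/(\<gamma>*q^2) \<ge> 0" using L g by simp
      ultimately show ?thesis unfolding e1 e2 by (intro mult_left_mono)
    qed
    also have "\<dots> = (4/sqrt \<gamma> * (1/q) * s)^2"
      unfolding s_def using g q nr L by (simp add: power_mult_distrib power_divide)
    finally show "(Bd/(nr-1))^2 \<le> (4/sqrt \<gamma> * (1/q) * s)^2" .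
  qed
  have eq1: "exp q - 1 \<ge> q" using exp_ge_add_one_self[of q] by linarith
  have a: "M \<le> exp q / q^2" unfolding M_def vfun_def
    using q eq1 by (intro divide_left_mono power_mono) auto
  have eQ: "exp Q - 1 > 0" using q by simp
  have b: "1/m \<le> exp Q"
  proof -
    have "1/m = (exp Q - 1)^2 / exp Q" unfolding m_def vfun_def by simp
    also have "\<dots> \<le> (exp Q)^2 / exp Q" using eQ by (intro divide_right_mono power_mono) auto
    also have "\<dots> = exp Q" by (simp add: power2_eq_square)
    finally show ?thesis .
  qed
  have c: "M/m^2 \<le> exp (3*Q) * (1 + 1/q^4)"
  proof -
    have "M/m^2 = M * (1/m)^2" by (simp add: power_divide)
    also have "\<dots> \<le> (exp q / q^2) * (exp Q)^2" using a b M0 m0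
      by (intro mult_mono power_mono) auto
    also have "\<dots> \<le> (exp Q / q^2) * (exp Q)^2" using q
      by (intro mult_right_mono divide_right_mono) auto
    also have "\<dots> = exp (3*Q) * (1/q^2)"
      by (simp add: power2_eq_square exp_add[symmetric])
    also have "\<dots> \<le> exp (3*Q) * (1 + 1/q^4)"
    proof -
      have "1/q^2 \<le> 1 + (1/q^2)^2" by (smt (verit) power2_eq_square mult_le_cancel_left1 zero_less_power q(1) divide_pos_pos)
      hence "1/q^2 \<le> 1 + 1/q^4" by (simp add: power_divide flip: power_mult)
      thus ?thesis by (intro mult_left_mono) auto
    qed
    finally show ?thesis .
  qed
  have MK: "M/m^2 + 2/m \<le> 2*K"
  proof -
    have "exp (3*Q) * (1 + 1/q^4) \<ge> 0" using q by simp
    moreover have "2/m = 2*(1/m)" by simp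
    moreover have gl: "u1 + 2*u3 \<le> 2*(u2 + u4)" if "u1 \<le> u2" "u3 \<le> u4" "0 \<le> u2" for u1 u2 u3 u4 :: real using that by (smt (verit))
    ultimately show ?thesis unfolding K_def using gl[OF c b] by simp
  qed
  have gen: "\<And>M B m t. m \<noteq> 0 \<Longrightarrow> t \<noteq> 0 \<Longrightarrow> 2*(M*B/m + 2*B)/(m*t) = 2*(B/t)*(M/m^2 + 2/(m::real))"
    by (simp add: field_simps power2_eq_square)
  have "2*(M*Bd/m + 2*Bd)/(m*(nr-1)) = 2 * (Bd/(nr-1)) * (M/m^2 + 2/m)"
    using gen[of m "nr-1" M Bd] m0 n1 by simp
  also have "\<dots> \<le> 2 * (4/sqrt \<gamma> * (1/q) * s) * (2*K)"
    using d MK Bd0 n1 m0 M0 s0 g q by (intro mult_mono mult_left_mono) (auto intro!: add_nonneg_nonneg)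
  also have "\<dots> = (16/sqrt \<gamma>) * ((1/q) * K * s)" by simp
  finally show ?thesis unfolding Bd_def m_def M_def K_def s_def .
qed
theorem lemma6:
  fixes \<gamma> :: real
  assumes "\<gamma> > 0"
  shows "\<exists>C. \<forall>(\<theta>s :: nat \<Rightarrow> nat \<Rightarrow> real) (q :: nat \<Rightarrow> real) (Q :: nat \<Rightarrow> real)
              (A :: nat \<Rightarrow> nat \<Rightarrow> nat \<Rightarrow> nat).
     (\<forall>n\<ge>2. 0 < q n \<and> q n \<le> Q n) \<longrightarrow>
     (\<forall>n\<ge>2. \<forall>i<n. \<forall>j<n. i \<noteq> j \<longrightarrow>
         q n \<le> alpha n (\<theta>s n) i + beta n (\<theta>s n) j \<and>
         alpha n (\<theta>s n) i + beta n (\<theta>s n) j \<le> Q n) \<longrightarrow>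
     (\<lambda>n. (exp (q n) / (exp (q n) - 1)^2) / (exp (Q n) / (exp (Q n) - 1)^2))
        \<in> o(\<lambda>n. real n) \<longrightarrow>
     (\<forall>n\<ge>2. \<forall>i<n.
         \<bar>out_deg n (A n) i - E_out n (\<theta>s n) i\<bar> \<le> sqrt (8 * (real n - 1) * ln (real n) / (\<gamma> * (q n)^2)) \<and>
         \<bar>in_deg n (A n) i - E_in n (\<theta>s n) i\<bar> \<le> sqrt (8 * (real n - 1) * ln (real n) / (\<gamma> * (q n)^2))) \<longrightarrow>
     (\<exists>N. \<forall>n\<ge>N. r_newton n (A n) (\<theta>s n) \<le>
         C * ((1 / q n) * (exp (3 * Q n) * (1 + 1 / (q n)^4) + exp (Q n)) * sqrt (ln (real n) / real n)))"
proof -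
  define C where "C = 16 / sqrt \<gamma>"
  show ?thesis
  proof (intro exI[of _ C] allI impI)
    fix \<theta>s :: "nat \<Rightarrow> nat \<Rightarrow> real" and q Q :: "nat \<Rightarrow> real" and A :: "nat \<Rightarrow> nat \<Rightarrow> nat \<Rightarrow> nat"
    assume H1: "\<forall>n\<ge>2. 0 < q n \<and> q n \<le> Q n"
      and H2: "\<forall>n\<ge>2. \<forall>i<n. \<forall>j<n. i \<noteq> j \<longrightarrow>
         q n \<le> alpha n (\<theta>s n) i + beta n (\<theta>s n) j \<and>
         alpha n (\<theta>s n) i + beta n (\<theta>s n) j \<le> Q n"
      and H3: "(\<lambda>n. (exp (q n) / (exp (q n) - 1)^2) / (exp (Q n) / (exp (Q n) - 1)^2))
        \<in> o(\<lambda>n. real n)"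
      and H4: "\<forall>n\<ge>2. \<forall>i<n.
         \<bar>out_deg n (A n) i - E_out n (\<theta>s n) i\<bar> \<le> sqrt (8 * (real n - 1) * ln (real n) / (\<gamma> * (q n)^2)) \<and>
         \<bar>in_deg n (A n) i - E_in n (\<theta>s n) i\<bar> \<le> sqrt (8 * (real n - 1) * ln (real n) / (\<gamma> * (q n)^2))"
    have "eventually (\<lambda>n. norm ((exp (q n) / (exp (q n) - 1)^2) / (exp (Q n) / (exp (Q n) - 1)^2))
             \<le> (1/4) * norm (real n)) at_top"
      using landau_o.smallD[OF H3, of "1/4"] by simp
    then obtain N0 where N0: "\<And>n. n \<ge> N0 \<Longrightarrow> norm ((exp (q n) / (exp (q n) - 1)^2) / (exp (Q n) / (exp (Q n) - 1)^2))
             \<le> (1/4) * norm (real n)"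
      by (auto simp: eventually_at_top_linorder)
    show "\<exists>N. \<forall>n\<ge>N. r_newton n (A n) (\<theta>s n) \<le>
         C * ((1 / q n) * (exp (3 * Q n) * (1 + 1 / (q n)^4) + exp (Q n)) * sqrt (ln (real n) / real n))"
    proof (intro exI[of _ "max N0 2"] allI impI)
      fix n assume nN: "max N0 2 \<le> n"
      then have n2: "n \<ge> 2" and nN0: "n \<ge> N0" by auto
      define p where "p = \<theta>s n"
      define m where "m = vfun (Q n)"
      define M where "M = vfun (q n)"
      define Bd where "Bd = sqrt (8 * (real n - 1) * ln (real n) / (\<gamma> * (q n)^2))"
      define N where "N = 2*n-1"
      have qn: "0 < q n" "q n \<le> Q n" using H1 n2 by auto
      have m0: "m > 0" unfolding m_def using qn by (intro vfun_pos) auto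
      have sb: "\<And>i j. i<n \<Longrightarrow> j<n \<Longrightarrow> i\<noteq>j \<Longrightarrow> q n \<le> alpha n p i + beta n p j \<and> alpha n p i + beta n p j \<le> Q n"
        using H2 n2 unfolding p_def by blast
      have vb: "\<And>i j. i<n \<Longrightarrow> j<n \<Longrightarrow> i\<noteq>j \<Longrightarrow> alpha n p i + beta n p j \<noteq> 0 \<and>
        m \<le> vfun (alpha n p i + beta n p j) \<and> vfun (alpha n p i + beta n p j) \<le> M"
      proof -
        fix i j assume ij: "i<n" "j<n" "i\<noteq>j"
        note s = sb[OF ij]
        show "alpha n p i + beta n p j \<noteq> 0 \<and>
          m \<le> vfun (alpha n p i + beta n p j) \<and> vfun (alpha n p i + beta n p j) \<le> M"
          unfolding m_def M_def using s qn
          by (auto intro!: vfun_antimono)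
      qed
      have Mn: "2*M \<le> m*(real n - 1)"
      proof -
        have "norm (M / m) \<le> (1/4) * norm (real n)"
          using N0[OF nN0] unfolding M_def m_def vfun_def .
        moreover have "M > 0" unfolding M_def using qn by (intro vfun_pos) auto
        ultimately have "M / m \<le> real n / 4" using m0 by simp
        hence "M \<le> m * real n / 4" using m0 by (simp add: divide_simps mult.commute)
        moreover have "m * real n / 4 \<le> m * (real n - 1) / 2"
          using m0 n2 by (simp add: divide_simps)
        ultimately show ?thesis by simp
      qed
      have JC: "Jac n (A n) p \<in> carrier_mat N N" unfolding Jac_def N_def by simp
      have inv: "mat_inverse (Jac n (A n) p) \<noteq> None"
      proof
        assume none: "mat_inverse (Jac n (A n) p) = None"
        have "Jac n (A n) p \<notin> Units (ring_mat TYPE(real) N ())"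
          using mat_inverse(1)[OF JC none] .
        hence "det (Jac n (A n) p) = 0" using det_non_zero_imp_unit[OF JC, where b="()"] by blast
        then obtain vv where vv: "vv \<in> carrier_vec N" "vv \<noteq> 0\<^sub>v N" "Jac n (A n) p *\<^sub>v vv = 0\<^sub>v N"
          using det_0_iff_vec_prod_zero[OF JC] by blast
        have dv: "dim_vec vv = 2*n-1" using vv(1) unfolding N_def by simp
        have "\<forall>i<2*n-1. \<bar>vv $ i\<bar> \<le> 2*(M*0/m + 2*0)/(m*(real n - 1))"
          by (rule solve_bound[OF n2 m0 vb Mn dv, where A="A n" and F="\<lambda>_. 0" and B=0]) (use vv(3) N_def in auto)
        hence "vv = 0\<^sub>v N" using vv(1) unfolding N_def by (intro eq_vecI) auto
        with vv(2) show False by simp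
      qed
      then obtain Binv where Binv: "mat_inverse (Jac n (A n) p) = Some Binv" by auto
      from mat_inverse(2)[OF JC Binv] have JB: "Jac n (A n) p * Binv = 1\<^sub>m N" and BC: "Binv \<in> carrier_mat N N"
        by auto
      define Fv where "Fv = Fvec n (A n) p"
      have FvC: "Fv \<in> carrier_vec N" unfolding Fv_def Fvec_def N_def by simp
      define z where "z = Binv *\<^sub>v Fv"
      have dz: "dim_vec z = 2*n-1" unfolding z_def using BC N_def by simp
      have Jz: "Jac n (A n) p *\<^sub>v z = Fv"
        unfolding z_def using assoc_mult_mat_vec[OF JC BC FvC, symmetric] JB FvC by simp
      have eq: "\<And>k. k < 2*n-1 \<Longrightarrow> (Jac n (A n) p *\<^sub>v z) $ k = Fmap n (A n) p k"
        unfolding Jz Fv_def Fvec_def by simp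
      have gm: "\<And>i j. i<n \<Longrightarrow> j<n \<Longrightarrow> i\<noteq>j \<Longrightarrow> geom_mean (alpha n p i + beta n p j) = fgeo (alpha n p i + beta n p j)"
        using sb qn by (intro geom_mean_eq) (meson less_le_trans)
      have Eo: "E_out n p k = (\<Sum>l\<in>{..<n}-{k}. fgeo (alpha n p k + beta n p l))" if "k<n" for k
        unfolding E_out_def using gm that by (intro sum.cong refl) auto
      have Ei: "E_in n p j = (\<Sum>l\<in>{..<n}-{j}. fgeo (alpha n p l + beta n p j))" if "j<n" for j
        unfolding E_in_def using gm that by (intro sum.cong refl) auto
      define G where "G j = in_deg n (A n) j - (\<Sum>l\<in>{..<n}-{j}. fgeo (alpha n p l + beta n p j))" for j
      have Frow: "Fmap n (A n) p k = out_deg n (A n) k - E_out n p k" if "k<n" for k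
        using that Eo[OF that] unfolding Fmap_def by simp
      have Fcol: "Fmap n (A n) p (n+j) = G j" for j
        unfolding Fmap_def G_def by simp
      have FB: "\<And>k. k < 2*n-1 \<Longrightarrow> \<bar>Fmap n (A n) p k\<bar> \<le> Bd"
      proof -
        fix k assume k: "k < 2*n-1"
        show "\<bar>Fmap n (A n) p k\<bar> \<le> Bd"
        proof (cases "k < n")
          case True then show ?thesis using Frow H4 n2 unfolding Bd_def p_def by auto
        next
          case False
          then have kk: "k = n + (k-n)" "k-n < n" using k by auto
          have "Fmap n (A n) p k = in_deg n (A n) (k-n) - E_in n p (k-n)"
            using Fcol[of "k-n"] kk Ei[OF kk(2)] unfolding G_def by simp
          then show ?thesis using H4 n2 kk(2) unfolding Bd_def p_def by auto
        qed
      qed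
      have FL: "\<bar>(\<Sum>k<n. Fmap n (A n) p k) - (\<Sum>j<n-1. Fmap n (A n) p (n+j))\<bar> \<le> Bd"
      proof -
        have s1: "(\<Sum>k<n. out_deg n (A n) k) = (\<Sum>j<n. in_deg n (A n) j)"
          unfolding out_deg_def in_deg_def by (rule offdiag_swap)
        have s2: "(\<Sum>k<n. \<Sum>l\<in>{..<n}-{k}. fgeo (alpha n p k + beta n p l))
            = (\<Sum>j<n. \<Sum>l\<in>{..<n}-{j}. fgeo (alpha n p l + beta n p j))"
          by (rule offdiag_swap)
        have "(\<Sum>k<n. Fmap n (A n) p k) = (\<Sum>k<n. out_deg n (A n) k - (\<Sum>l\<in>{..<n}-{k}. fgeo (alpha n p k + beta n p l)))"
          unfolding Fmap_def by simp
        also have "\<dots> = (\<Sum>j<n. G j)" unfolding G_def sum_subtractf s1 s2 ..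
        finally have e1: "(\<Sum>k<n. Fmap n (A n) p k) = (\<Sum>j<n. G j)" .
        have nset: "{..<n} = insert (n-1) {..<n-1}" using n2 by auto
        have "(\<Sum>j<n. G j) = G (n-1) + (\<Sum>j<n-1. G j)" unfolding nset by simp
        hence "(\<Sum>k<n. Fmap n (A n) p k) - (\<Sum>j<n-1. Fmap n (A n) p (n+j)) = G (n-1)"
          using e1 Fcol by simp
        also have "G (n-1) = in_deg n (A n) (n-1) - E_in n p (n-1)" unfolding G_def using Ei[of "n-1"] n2 by simp
        finally show ?thesis using H4 n2 unfolding Bd_def p_def by auto
      qed
      have zb: "\<forall>i<2*n-1. \<bar>z $ i\<bar> \<le> 2*(M*Bd/m + 2*Bd)/(m*(real n - 1))"
        by (rule solve_bound[OF n2 m0 vb Mn dz eq FB FL])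
      have "r_newton n (A n) (\<theta>s n) = Max ((\<lambda>i. \<bar>z $ i\<bar>) ` {..<2*n-1})"
        unfolding r_newton_def sup_norm_vec_def p_def[symmetric] Fv_def[symmetric] Binv option.sel z_def[symmetric] dz ..
      also have "\<dots> \<le> 2*(M*Bd/m + 2*Bd)/(m*(real n - 1))"
        using zb n2 by (subst Max_le_iff) (auto simp: lessThan_empty_iff)
      also have "\<dots> \<le> C * ((1 / q n) * (exp (3 * Q n) * (1 + 1 / (q n)^4) + exp (Q n)) * sqrt (ln (real n) / real n))"
        unfolding C_def M_def m_def Bd_def
        using final_arith[OF qn _ _ assms, of "real n" "ln (real n)"] n2 by simp
      finally show "r_newton n (A n) (\<theta>s n) \<le>
         C * ((1 / q n) * (exp (3 * Q n) * (1 + 1 / (q n)^4) + exp (Q n)) * sqrt (ln (real n) / real n))" .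
    qed
  qed
qed

end
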